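(* Let $Z\in\Theta_2(r_0,s_0)$ and let $r_1<r_2<r_0$, $s_1<s_2<s_0$. Then for any $Y\in\Theta_2(r_1,s_1)$, $$\|P_{\Theta_2(r_2,s_2)}(Z)-Z\|_{\rm F}\le(\alpha+\beta+\alpha\beta)\,\|Y-Z\|_{\rm F},$$ where $\alpha=\sqrt{(s_0-s_2)/(s_0-s_1)}$ and $\beta=\sqrt{(r_0-r_2)/(r_0-r_1)}$.
   Context: For $A\in\mathbb{R}^{d_1\times d_2\times d_3}$, its slices are $A_{\cdot\cdot j_3}=(A_{j_1j_2j_3})_{j_1,j_2}\in\mathbb{R}^{d_1\times d_2}$, $1\le j_3\le d_3$; $\|\cdot\|_{\rm F}$ is the Frobenius norm. $\Theta_2(r,s)=\{A\in\mathbb{R}^{d_1\times d_2\times d_3}: \max_{j_3}\mathrm{rank}(A_{\cdot\cdot j_3})\le r,\ \sum_{j_3}\mathbb{1}(A_{\cdot\cdot j_3}\ne0)\le s\}$. $P_{\Theta_2(r,s)}(A)$ is defined in two steps: (1) replace each slice $A_{\cdot\cdot j_3}$ by its best rank-$r$ Frobenius-norm approximation $\tilde A_{\cdot\cdot j_3}$; (2) keep the $s$ slices with the largest $\|\tilde A_{\cdot\cdot j_3}\|_{\rm F}$ and set all other slices to zero. *)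

theory Defs
  imports "HOL-Analysis.Analysis"
begin

text \<open>A tensor in R^(d1 x d2 x d3) is represented by its family of slices:
  a function from the (finite) third index type 'k to d1 x d2 real matrices
  real^'n^'m (d1 = CARD('m), d2 = CARD('n), d3 = CARD('k)).\<close>

type_synonym ('n,'m,'k) tensor3 = "'k \<Rightarrow> real^'n^'m"

definition frob_mat :: "real^'n^'m \<Rightarrow> real" where
  "frob_mat M = sqrt (\<Sum>i\<in>UNIV. \<Sum>j\<in>UNIV. (M $ i $ j)^2)"

definition frob :: "('k::finite \<Rightarrow> real^'n^'m) \<Rightarrow> real" where
  "frob A = sqrt (\<Sum>k\<in>UNIV. \<Sum>i\<in>UNIV. \<Sum>j\<in>UNIV. (A k $ i $ j)^2)"

definition Theta2 :: "nat \<Rightarrow> nat \<Rightarrow> ('k::finite \<Rightarrow> real^'n^'m) set" where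
  "Theta2 r s = {A. (\<forall>k. rank (A k) \<le> r) \<and> card {k. A k \<noteq> 0} \<le> s}"

definition best_rank_approx :: "nat \<Rightarrow> real^'n^'m \<Rightarrow> real^'n^'m \<Rightarrow> bool" where
  "best_rank_approx r M B \<longleftrightarrow> rank B \<le> r \<and>
     (\<forall>C. rank C \<le> r \<longrightarrow> frob_mat (M - C) \<ge> frob_mat (M - B))"

text \<open>X is a possible value of P_{Theta2(r,s)}(A): every slice replaced by a best
  rank-r approximation, then the s slices (all slices if s >= d3) of largest
  Frobenius norm are kept (ties broken arbitrarily), the rest set to zero.\<close>
definition is_P_Theta2 :: "nat \<Rightarrow> nat \<Rightarrow> ('k::finite \<Rightarrow> real^'n^'m)
    \<Rightarrow> ('k \<Rightarrow> real^'n^'m) \<Rightarrow> bool" where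
  "is_P_Theta2 r s A X \<longleftrightarrow>
     (\<exists>At S. (\<forall>k. best_rank_approx r (A k) (At k)) \<and>
        card S = min s CARD('k) \<and>
        (\<forall>k\<in>S. \<forall>k'. k' \<notin> S \<longrightarrow> frob_mat (At k') \<le> frob_mat (At k)) \<and>
        (\<forall>k. X k = (if k \<in> S then At k else 0)))"

end

theory Submission
  imports Defs
begin

lemma frob_mat_norm: "frob_mat (M::real^'n^'m) = norm M"
  unfolding frob_mat_def norm_vec_def L2_set_def
  by (simp add: power2_eq_square sum_nonneg)

lemma frob_norm: "frob (A::'k::finite \<Rightarrow> real^'n^'m) = norm (\<chi> k. A k)"
  unfolding frob_def norm_vec_def L2_set_def
  by (simp add: power2_eq_square sum_nonneg)

lemma norm_sq_rows: "norm (A::real^'n^'m) ^ 2 = (\<Sum>a\<in>UNIV. norm (A$a) ^ 2)"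
  unfolding norm_vec_def[of A] L2_set_def
  by (simp add: sum_nonneg)

lemma norm_sq_tensor: "norm (\<chi> k. (A::'k::finite \<Rightarrow> real^'n^'m) k) ^ 2 = (\<Sum>k\<in>UNIV. norm (A k) ^ 2)"
  unfolding norm_vec_def L2_set_def
  by (simp add: sum_nonneg)

lemma norm_sum_orth:
  fixes w :: "'i \<Rightarrow> 'a::real_inner"
  assumes "finite I" "\<And>i j. i \<in> I \<Longrightarrow> j \<in> I \<Longrightarrow> i \<noteq> j \<Longrightarrow> inner (w i) (w j) = 0"
  shows "norm (\<Sum>i\<in>I. c i *\<^sub>R w i) ^ 2 = (\<Sum>i\<in>I. (c i)^2 * norm (w i) ^ 2)"
proof -
  have "norm (\<Sum>i\<in>I. c i *\<^sub>R w i) ^ 2 = inner (\<Sum>i\<in>I. c i *\<^sub>R w i) (\<Sum>j\<in>I. c j *\<^sub>R w j)"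
    by (simp add: power2_norm_eq_inner)
  also have "\<dots> = (\<Sum>i\<in>I. \<Sum>j\<in>I. c i * c j * inner (w i) (w j))"
    apply (simp add: inner_sum_left inner_sum_right sum_distrib_left mult.assoc)
    apply (subst sum.swap) apply (simp add: mult.left_commute)
    done
  also have "\<dots> = (\<Sum>i\<in>I. c i * c i * inner (w i) (w i))"
  proof (rule sum.cong[OF refl])
    fix i assume i: "i \<in> I"
    have "(\<Sum>j\<in>I. c i * c j * inner (w i) (w j)) = (\<Sum>j\<in>I. if j = i then c i * c i * inner (w i) (w i) else 0)"
      by (rule sum.cong[OF refl]) (use assms(2) i in auto)
    also have "\<dots> = c i * c i * inner (w i) (w i)" using assms(1) i by simp
    finally show "(\<Sum>j\<in>I. c i * c j * inner (w i) (w j)) = c i * c i * inner (w i) (w i)" .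
  qed
  also have "\<dots> = (\<Sum>i\<in>I. (c i)^2 * norm (w i) ^ 2)"
    by (simp add: dot_square_norm power2_eq_square)
  finally show ?thesis .
qed

definition orthn :: "('i \<Rightarrow> 'a::real_inner) \<Rightarrow> 'i set \<Rightarrow> bool" where
  "orthn e I \<longleftrightarrow> (\<forall>i\<in>I. \<forall>j\<in>I. inner (e i) (e j) = (if i = j then 1 else 0))"

lemma orthn_residual:
  assumes "orthn e I" "finite I" "j \<in> I"
  shows "inner (x - (\<Sum>i\<in>I. inner x (e i) *\<^sub>R e i)) (e j) = 0"
proof -
  have "inner (\<Sum>i\<in>I. inner x (e i) *\<^sub>R e i) (e j) = (\<Sum>i\<in>I. if i = j then inner x (e j) else 0)"
    unfolding inner_sum_left by (rule sum.cong[OF refl]) (use assms in \<open>auto simp: orthn_def\<close>)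
  also have "\<dots> = inner x (e j)" using assms by simp
  finally show ?thesis by (simp add: inner_diff_left)
qed

lemma orthn_proj_norm:
  assumes "orthn e I" "finite I"
  shows "norm (\<Sum>i\<in>I. inner x (e i) *\<^sub>R e i) ^ 2 = (\<Sum>i\<in>I. (inner x (e i))^2)"
  and "inner x (\<Sum>i\<in>I. inner x (e i) *\<^sub>R e i) = (\<Sum>i\<in>I. (inner x (e i))^2)"
proof -
  have n1: "\<And>i. i \<in> I \<Longrightarrow> norm (e i) = 1"
    using assms(1) unfolding orthn_def by (metis norm_eq_sqrt_inner real_sqrt_one)
  show "norm (\<Sum>i\<in>I. inner x (e i) *\<^sub>R e i) ^ 2 = (\<Sum>i\<in>I. (inner x (e i))^2)"
    by (subst norm_sum_orth) (use assms n1 in \<open>auto simp: orthn_def\<close>)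
  show "inner x (\<Sum>i\<in>I. inner x (e i) *\<^sub>R e i) = (\<Sum>i\<in>I. (inner x (e i))^2)"
    by (simp add: inner_sum_right power2_eq_square)
qed

lemma orthn_proj_lower:
  fixes e :: "'i \<Rightarrow> 'a::real_inner"
  assumes "orthn e I" "finite I" "y \<in> span (e ` I)"
  shows "norm x ^ 2 - (\<Sum>i\<in>I. (inner x (e i))^2) \<le> norm (x - y) ^ 2"
proof -
  define p where "p = (\<Sum>i\<in>I. inner x (e i) *\<^sub>R e i)"
  have "p \<in> span (e ` I)" unfolding p_def
    by (intro span_sum span_scale span_base) auto
  hence py: "p - y \<in> span (e ` I)" using assms(3) by (simp add: span_diff)
  have "orthogonal (x - p) (p - y)"
    by (rule orthogonal_to_span[OF py]) (use orthn_residual[OF assms(1,2)] in \<open>auto simp: p_def orthogonal_def\<close>)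
  hence "norm (x - y) ^ 2 = norm (x - p) ^ 2 + norm (p - y) ^ 2"
    by (metis diff_add_cancel norm_add_Pythagorean orthogonal_def add_diff_eq)
  moreover have "norm (x - p) ^ 2 = norm x ^ 2 - (\<Sum>i\<in>I. (inner x (e i))^2)"
    using orthn_proj_norm[OF assms(1,2), of x]
    by (simp add: p_def power2_norm_eq_inner inner_diff_left inner_diff_right inner_commute)
  ultimately show ?thesis by simp
qed

lemma orthn_parseval:
  fixes e :: "nat \<Rightarrow> 'a::euclidean_space"
  assumes "orthn e {..<DIM('a)}"
  shows "x = (\<Sum>i<DIM('a). inner x (e i) *\<^sub>R e i)"
    and "norm x ^ 2 = (\<Sum>i<DIM('a). (inner x (e i))^2)"
proof -
  let ?B = "e ` {..<DIM('a)}"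
  have oij: "inner (e i) (e j) = (if i = j then 1 else 0)" if "i < DIM('a)" "j < DIM('a)" for i j
    using assms that unfolding orthn_def lessThan_iff by auto
  have inj: "inj_on e {..<DIM('a)}"
  proof (rule inj_onI)
    fix i j assume ij: "i \<in> {..<DIM('a)}" "j \<in> {..<DIM('a)}" "e i = e j"
    show "i = j"
    proof (rule ccontr)
      assume "i \<noteq> j"
      hence "inner (e i) (e j) = 0" using oij[of i j] ij(1,2) by simp
      moreover have "inner (e i) (e i) = 1" using oij[of i i] ij(1) by simp
      hence "inner (e i) (e j) = 1" using ij(3) by simp
      ultimately show False by simp
    qed
  qed
  have "pairwise orthogonal ?B"
    unfolding pairwise_def orthogonal_def
  proof (intro ballI impI)
    fix x y assume "x \<in> ?B" "y \<in> ?B" "x \<noteq> y"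
    then obtain i j where "i < DIM('a)" "j < DIM('a)" "x = e i" "y = e j" "i \<noteq> j" by blast
    thus "inner x y = 0" using oij by simp
  qed
  moreover have "0 \<notin> ?B"
  proof
    assume "0 \<in> ?B"
    then obtain i where i: "0 = e i" "i \<in> {..<DIM('a)}" by (rule imageE)
    have "inner (e i) (e i) = 1" using oij[of i i] i(2) by simp
    thus False using i(1) by (metis inner_zero_left zero_neq_one)
  qed
  ultimately have ind: "independent ?B" by (rule pairwise_orthogonal_independent)
  have "card ?B = DIM('a)" using inj by (simp add: card_image)
  hence "UNIV \<subseteq> span ?B"
    using card_ge_dim_independent[OF subset_UNIV ind] by (simp add: dim_UNIV)
  define p where "p = (\<Sum>i<DIM('a). inner x (e i) *\<^sub>R e i)"
  have "orthogonal (x - p) (x - p)"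
  proof (rule orthogonal_to_span[of "x - p" ?B])
    show "x - p \<in> span ?B" using \<open>UNIV \<subseteq> span ?B\<close> by blast
  next
    fix y assume "y \<in> ?B"
    then obtain j where j: "j \<in> {..<DIM('a)}" "y = e j" by blast
    show "orthogonal (x - p) y"
      unfolding orthogonal_def p_def j(2) by (rule orthn_residual[OF assms finite_lessThan j(1)])
  qed
  hence xp: "x = p" by (simp add: orthogonal_def)
  thus "x = (\<Sum>i<DIM('a). inner x (e i) *\<^sub>R e i)" unfolding p_def .
  have "norm x ^ 2 = norm p ^ 2" using xp by simp
  also have "\<dots> = (\<Sum>i<DIM('a). (inner x (e i))^2)"
    unfolding p_def by (rule orthn_proj_norm(1)[OF assms finite_lessThan])
  finally show "norm x ^ 2 = (\<Sum>i<DIM('a). (inner x (e i))^2)" .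
qed

lemma norm_sq_vec: "norm (y::real^'m) ^ 2 = (\<Sum>a\<in>UNIV. (y$a) ^ 2)"
  unfolding norm_vec_def L2_set_def by (simp add: sum_nonneg)

lemma frob_basis:
  fixes A :: "real^'n^'m" and v :: "nat \<Rightarrow> real^'n"
  assumes "orthn v {..<CARD('n)}"
  shows "norm A ^ 2 = (\<Sum>i<CARD('n). norm (A *v v i) ^ 2)"
proof -
  have o: "orthn v {..<DIM(real^'n)}" using assms by simp
  have "(\<Sum>i<CARD('n). norm (A *v v i) ^ 2) = (\<Sum>i<CARD('n). \<Sum>a\<in>UNIV. (inner (A$a) (v i))^2)"
    by (simp add: norm_sq_vec matrix_vector_mul_component)
  also have "\<dots> = (\<Sum>a\<in>UNIV. \<Sum>i<CARD('n). (inner (A$a) (v i))^2)" by (rule sum.swap)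
  also have "\<dots> = (\<Sum>a\<in>UNIV. norm (A$a) ^ 2)"
    using orthn_parseval(2)[OF o] by simp
  finally show ?thesis by (simp add: norm_sq_rows)
qed

lemma lin_coeff_zero:
  fixes a c :: real
  assumes "\<And>t. 2 * t * a \<le> t^2 * c"
  shows "a = 0"
proof (rule ccontr)
  assume a: "a \<noteq> 0"
  define d where "d = \<bar>c\<bar> + 1"
  have d: "d > 0" by (simp add: d_def)
  have "2 * (a/d) * a \<le> (a/d)^2 * c" by (rule assms)
  hence "(2 * (a/d) * a) * d^2 \<le> ((a/d)^2 * c) * d^2" by (rule mult_right_mono) simp
  moreover have "(2 * (a/d) * a) * d^2 = 2 * a^2 * d" using d by (simp add: power2_eq_square field_simps)
  moreover have "((a/d)^2 * c) * d^2 = a^2 * c" using d by (simp add: power2_eq_square field_simps)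
  ultimately have "2 * a^2 * d \<le> a^2 * c" by simp
  moreover have "a^2 * c < a^2 * (2 * d)"
    by (rule mult_strict_left_mono) (use a in \<open>auto simp: d_def\<close>)
  ultimately show False by linarith
qed

definition maxp :: "real^'n^'m \<Rightarrow> (nat \<Rightarrow> real^'n) \<Rightarrow> nat \<Rightarrow> bool" where
  "maxp M v k \<longleftrightarrow> (\<forall>i<k. \<forall>x. (\<forall>j<i. inner x (v j) = 0) \<longrightarrow>
      norm (M *v x) ^ 2 \<le> norm (M *v v i) ^ 2 * norm x ^ 2)"

lemma svd_step:
  fixes M :: "real^'n^'m"
  shows "k \<le> CARD('n) \<Longrightarrow> \<exists>v. orthn v {..<k} \<and> maxp M v k"
proof (induction k)
  case 0
  show ?case by (auto simp: orthn_def maxp_def)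
next
  case (Suc k)
  then obtain v where v: "orthn v {..<k}" "maxp M v k" by auto
  have kn: "k < CARD('n)" using Suc.prems by simp
  define T where "T = {x::real^'n. \<forall>j<k. inner x (v j) = 0}"
  define S where "S = sphere (0::real^'n) 1 \<inter> T"
  have "subspace T" unfolding T_def subspace_def
    by (auto simp: inner_add_left)
  hence "closed T" by (rule closed_subspace)
  hence cS: "compact S" unfolding S_def by (intro compact_Int_closed) auto
  have "dim (v ` {..<k}) \<le> card (v ` {..<k})"
    by (rule dim_le_card) (auto intro: span_base)
  also have "\<dots> \<le> k" using card_image_le[of "{..<k}" v] by simp
  finally have "dim (v ` {..<k}) < DIM(real^'n)" using kn by simp
  then obtain x where x: "x \<noteq> 0" "\<And>y. y \<in> span (v ` {..<k}) \<Longrightarrow> orthogonal x y"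
    by (rule orthogonal_to_subspace_exists) blast+
  have "x /\<^sub>R norm x \<in> S" unfolding S_def T_def
    using x by (auto simp: orthogonal_def span_base)
  hence neS: "S \<noteq> {}" by blast
  have "continuous_on S (\<lambda>x. norm (M *v x))"
    by (intro continuous_intros)
  from continuous_attains_sup[OF cS neS this]
  obtain x0 where x0: "x0 \<in> S" "\<And>y. y \<in> S \<Longrightarrow> norm (M *v y) \<le> norm (M *v x0)" by blast
  have x0n: "norm x0 = 1" and x0T: "\<And>j. j < k \<Longrightarrow> inner x0 (v j) = 0"
    using x0(1) by (auto simp: S_def T_def)
  define v' where "v' = v(k := x0)"
  have "orthn v' {..<Suc k}"
    unfolding orthn_def
  proof (intro ballI)
    fix i j assume ij: "i \<in> {..<Suc k}" "j \<in> {..<Suc k}"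
    show "inner (v' i) (v' j) = (if i = j then 1 else 0)"
    proof (cases "i = k")
      case True
      show ?thesis
      proof (cases "j = k")
        case True
        thus ?thesis using \<open>i = k\<close> x0n by (simp add: v'_def dot_square_norm)
      next
        case False
        thus ?thesis using \<open>i = k\<close> ij x0T by (simp add: v'_def)
      qed
    next
      case False
      show ?thesis
      proof (cases "j = k")
        case True
        thus ?thesis using \<open>i \<noteq> k\<close> ij x0T by (simp add: v'_def inner_commute)
      next
        case False
        thus ?thesis using \<open>i \<noteq> k\<close> ij v(1) by (simp add: v'_def orthn_def)
      qed
    qed
  qed
  moreover have "maxp M v' (Suc k)"
    unfolding maxp_def
  proof (intro allI impI)
    fix i x assume i: "i < Suc k" and xo: "\<forall>j<i. inner x (v' j) = 0"
    show "norm (M *v x) ^ 2 \<le> norm (M *v v' i) ^ 2 * norm x ^ 2"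
    proof (cases "i = k")
      case False
      hence "i < k" using i by simp
      hence "\<forall>j<i. inner x (v j) = 0" using xo by (simp add: v'_def)
      thus ?thesis using v(2) \<open>i < k\<close> \<open>i \<noteq> k\<close> by (simp add: maxp_def v'_def)
    next
      case True
      have xT: "\<forall>j<k. inner x (v j) = 0" using xo True by (simp add: v'_def)
      show ?thesis
      proof (cases "x = 0")
        case True thus ?thesis by simp
      next
        case False
        have "x /\<^sub>R norm x \<in> S" using xT False by (simp add: S_def T_def)
        hence "norm (M *v (x /\<^sub>R norm x)) \<le> norm (M *v x0)" by (rule x0(2))
        hence "norm (M *v x) / norm x \<le> norm (M *v x0)"
          by (simp add: matrix_vector_mult_scaleR divide_inverse mult.commute)
        hence "norm (M *v x) \<le> norm (M *v x0) * norm x"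
          using False by (simp add: divide_le_eq)
        hence "norm (M *v x) ^ 2 \<le> (norm (M *v x0) * norm x) ^ 2"
          by (rule power_mono) simp
        thus ?thesis using True by (simp add: v'_def power_mult_distrib)
      qed
    qed
  qed
  ultimately show ?case by blast
qed

lemma maxp_orth:
  fixes M :: "real^'n^'m"
  assumes o: "orthn v {..<n}" and mp: "maxp M v n" and ij: "i < j" "j < n"
  shows "inner (M *v v i) (M *v v j) = 0"
proof (rule lin_coeff_zero)
  fix t :: real
  let ?a = "inner (M *v v i) (M *v v j)"
  let ?x = "v i + t *\<^sub>R v j"
  have oo: "\<And>p q. p < n \<Longrightarrow> q < n \<Longrightarrow> inner (v p) (v q) = (if p = q then 1 else 0)"
    using o by (simp add: orthn_def)
  have "\<forall>l<i. inner ?x (v l) = 0"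
    using oo ij by (simp add: inner_add_left)
  hence "norm (M *v ?x) ^ 2 \<le> norm (M *v v i) ^ 2 * norm ?x ^ 2"
    using mp ij by (simp add: maxp_def)
  moreover have "norm ?x ^ 2 = 1 + t^2"
  proof -
    have "norm ?x ^ 2 = inner ?x ?x" by (rule power2_norm_eq_inner)
    also have "\<dots> = 1 + t^2" using oo[of i i] oo[of j j] oo[of i j] oo[of j i] ij
      by (simp add: inner_add_left inner_add_right power2_eq_square)
    finally show ?thesis .
  qed
  moreover have "norm (M *v ?x) ^ 2 = norm (M *v v i) ^ 2 + 2 * t * ?a + t^2 * norm (M *v v j) ^ 2"
  proof -
    have "norm (M *v ?x) ^ 2 = inner (M *v ?x) (M *v ?x)" by (rule power2_norm_eq_inner)
    also have "\<dots> = inner (M *v v i) (M *v v i) + 2 * t * ?a + t^2 * inner (M *v v j) (M *v v j)"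
      by (simp add: matrix_vector_right_distrib matrix_vector_mult_scaleR
        inner_add_left inner_add_right inner_commute power2_eq_square algebra_simps)
    finally show ?thesis by (simp add: power2_norm_eq_inner)
  qed
  ultimately have "norm (M *v v i) ^ 2 + 2 * t * ?a + t^2 * norm (M *v v j) ^ 2
      \<le> norm (M *v v i) ^ 2 * (1 + t^2)" by simp
  thus "2 * t * ?a \<le> t^2 * (norm (M *v v i) ^ 2 - norm (M *v v j) ^ 2)"
    by (simp add: algebra_simps)
qed

lemma svd_basis:
  fixes M :: "real^'n^'m"
  obtains v where "orthn v {..<CARD('n)}"
    "\<And>i j. i < CARD('n) \<Longrightarrow> j < CARD('n) \<Longrightarrow> i \<noteq> j \<Longrightarrow> inner (M *v v i) (M *v v j) = 0"
    "\<And>i j. i \<le> j \<Longrightarrow> j < CARD('n) \<Longrightarrow> norm (M *v v j) \<le> norm (M *v v i)"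
proof -
  obtain v where o: "orthn v {..<CARD('n)}" and mp: "maxp M v CARD('n)"
    using svd_step[of "CARD('n)" M] by auto
  have orth: "inner (M *v v i) (M *v v j) = 0" if "i < CARD('n)" "j < CARD('n)" "i \<noteq> j" for i j
  proof (cases "i < j")
    case True thus ?thesis using maxp_orth[OF o mp True] that by simp
  next
    case False
    hence "j < i" using that by simp
    thus ?thesis using maxp_orth[OF o mp \<open>j < i\<close>] that by (simp add: inner_commute)
  qed
  have dec: "norm (M *v v j) \<le> norm (M *v v i)" if "i \<le> j" "j < CARD('n)" for i j
  proof -
    have "\<forall>l<i. inner (v j) (v l) = 0" using o that by (simp add: orthn_def)
    hence "norm (M *v v j) ^ 2 \<le> norm (M *v v i) ^ 2 * norm (v j) ^ 2"
      using mp that by (simp add: maxp_def)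
    moreover have "norm (v j) = 1" using o that
      by (simp add: orthn_def norm_eq_sqrt_inner)
    ultimately have "norm (M *v v j) ^ 2 \<le> norm (M *v v i) ^ 2" by simp
    thus ?thesis by (rule power2_le_imp_le) simp
  qed
  show ?thesis by (rule that[OF o orth dec])
qed

lemma mv_sum: "(M::real^'n^'m) *v (\<Sum>i\<in>I. c i *\<^sub>R w i) = (\<Sum>i\<in>I. c i *\<^sub>R (M *v w i))"
  by (simp add: vec_eq_iff matrix_vector_mul_component inner_sum_right)

lemma orthn_resid_norm:
  assumes "orthn e I" "finite I"
  shows "norm (x - (\<Sum>i\<in>I. inner x (e i) *\<^sub>R e i)) ^ 2 = norm x ^ 2 - (\<Sum>i\<in>I. (inner x (e i))^2)"
  using orthn_proj_norm[OF assms, of x]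
  by (simp add: power2_norm_eq_inner inner_diff_left inner_diff_right inner_commute)

lemma orthn_bessel:
  assumes "orthn e I" "finite I"
  shows "(\<Sum>i\<in>I. (inner x (e i))^2) \<le> norm x ^ 2"
  using orthn_resid_norm[OF assms, of x] by (metis diff_ge_0_iff_ge zero_le_power2)

lemma svd_expand:
  fixes M :: "real^'n^'m"
  assumes o: "orthn v {..<CARD('n)}"
    and orth: "\<And>i j. i < CARD('n) \<Longrightarrow> j < CARD('n) \<Longrightarrow> i \<noteq> j \<Longrightarrow> inner (M *v v i) (M *v v j) = 0"
  shows "norm (M *v x) ^ 2 = (\<Sum>i<CARD('n). (inner x (v i))^2 * norm (M *v v i) ^ 2)"
proof -
  have o': "orthn v {..<DIM(real^'n)}" using o by simp
  have "x = (\<Sum>i<CARD('n). inner x (v i) *\<^sub>R v i)" using orthn_parseval(1)[OF o'] by simp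
  hence "M *v x = (\<Sum>i<CARD('n). inner x (v i) *\<^sub>R (M *v v i))"
    by (metis mv_sum)
  hence "norm (M *v x) ^ 2 = norm (\<Sum>i<CARD('n). inner x (v i) *\<^sub>R (M *v v i)) ^ 2" by simp
  also have "\<dots> = (\<Sum>i<CARD('n). (inner x (v i))^2 * norm (M *v v i) ^ 2)"
    by (rule norm_sum_orth) (use orth in auto)
  finally show ?thesis .
qed

lemma svd_rank_zero:
  fixes M :: "real^'n^'m"
  assumes o: "orthn v {..<CARD('n)}"
    and orth: "\<And>i j. i < CARD('n) \<Longrightarrow> j < CARD('n) \<Longrightarrow> i \<noteq> j \<Longrightarrow> inner (M *v v i) (M *v v j) = 0"
    and dec: "\<And>i j. i \<le> j \<Longrightarrow> j < CARD('n) \<Longrightarrow> norm (M *v v j) \<le> norm (M *v v i)"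
    and i: "rank M \<le> i" "i < CARD('n)"
  shows "M *v v i = 0"
proof (rule ccontr)
  assume nz: "M *v v i \<noteq> 0"
  let ?W = "(\<lambda>j. M *v v j) ` {..i}"
  have pos: "M *v v j \<noteq> 0" if "j \<le> i" for j
  proof -
    have "norm (M *v v i) \<le> norm (M *v v j)" using dec[OF that i(2)] .
    thus ?thesis using nz by auto
  qed
  have inj: "inj_on (\<lambda>j. M *v v j) {..i}"
  proof (rule inj_onI)
    fix j l assume jl: "j \<in> {..i}" "l \<in> {..i}" "M *v v j = M *v v l"
    show "j = l"
    proof (rule ccontr)
      assume "j \<noteq> l"
      hence "inner (M *v v j) (M *v v l) = 0" using orth jl(1,2) i(2) by simp
      hence "inner (M *v v j) (M *v v j) = 0" using jl(3) by simp
      thus False using pos jl(1) by simp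
    qed
  qed
  have "pairwise orthogonal ?W"
    unfolding pairwise_def orthogonal_def
  proof (intro ballI impI)
    fix x y assume xy: "x \<in> ?W" "y \<in> ?W" "x \<noteq> y"
    from xy(1) obtain j where j: "x = M *v v j" "j \<in> {..i}" by (rule imageE)
    from xy(2) obtain l where l: "y = M *v v l" "l \<in> {..i}" by (rule imageE)
    have "j \<noteq> l" using xy(3) j l by auto
    thus "inner x y = 0" using orth j l i(2) by simp
  qed
  moreover have "0 \<notin> ?W"
  proof
    assume "0 \<in> ?W"
    then obtain j where j: "0 = M *v v j" "j \<in> {..i}" by (rule imageE)
    thus False using pos[of j] by simp
  qed
  ultimately have ind: "independent ?W" by (rule pairwise_orthogonal_independent)
  have "?W \<subseteq> range (\<lambda>x. M *v x)" by auto
  from independent_card_le_dim[OF this ind]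
  have "card ?W \<le> rank M" by (simp add: rank_dim_range)
  moreover have "card ?W = Suc i" using inj by (simp add: card_image)
  ultimately show False using i(1) by simp
qed

lemma rearr:
  fixes mu c :: "nat \<Rightarrow> real"
  assumes c: "\<And>i. i < n \<Longrightarrow> 0 \<le> c i \<and> c i \<le> 1"
    and dec: "\<And>i j. i \<le> j \<Longrightarrow> j < n \<Longrightarrow> mu j \<le> mu i"
    and pos: "\<And>i. i < n \<Longrightarrow> 0 \<le> mu i"
    and sc: "(\<Sum>i<n. c i) \<le> real r"
  shows "(\<Sum>i<n. mu i * c i) \<le> (\<Sum>i<n. if i < r then mu i else 0)"
proof (cases "n \<le> r")
  case True
  show ?thesis
  proof (rule sum_mono)
    fix i assume "i \<in> {..<n}"
    hence "i < n" "i < r" using True by auto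
    thus "mu i * c i \<le> (if i < r then mu i else 0)"
      using c[of i] pos[of i] by (simp add: mult_left_le)
  qed
next
  case False
  hence rn: "r < n" by simp
  define p where "p = mu r"
  have "(\<Sum>i<n. mu i * c i - (if i < r then mu i else 0)) \<le> (\<Sum>i<n. p * (c i - (if i < r then 1 else 0)))"
  proof (rule sum_mono)
    fix i assume "i \<in> {..<n}"
    hence i: "i < n" by simp
    show "mu i * c i - (if i < r then mu i else 0) \<le> p * (c i - (if i < r then 1 else 0))"
    proof (cases "i < r")
      case True
      have "p \<le> mu i" unfolding p_def using dec[of i r] True rn by simp
      moreover have "c i - 1 \<le> 0" using c[OF i] by simp
      ultimately have "mu i * (c i - 1) \<le> p * (c i - 1)" by (rule mult_right_mono_neg)
      thus ?thesis using True by (simp add: algebra_simps)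
    next
      case False
      have "mu i \<le> p" unfolding p_def using dec[of r i] False i by simp
      hence "mu i * c i \<le> p * c i" using c[OF i] by (simp add: mult_right_mono)
      thus ?thesis using False by simp
    qed
  qed
  also have "\<dots> = p * ((\<Sum>i<n. c i) - (\<Sum>i<n. if i < r then 1 else 0))"
    by (simp add: sum_distrib_left sum_subtractf right_diff_distrib)
  also have "(\<Sum>i<n. if i < r then 1 else (0::real)) = real r"
  proof -
    have "(\<Sum>i<n. if i < r then 1 else (0::real)) = (\<Sum>i\<in>{i\<in>{..<n}. i < r}. 1)"
      by (rule sum.inter_filter[symmetric]) simp
    also have "{i\<in>{..<n}. i < r} = {..<r}" using rn by auto
    finally show ?thesis by simp
  qed
  also have "p * ((\<Sum>i<n. c i) - real r) \<le> 0"
    using sc pos[of r] rn by (simp add: p_def mult_nonneg_nonpos)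
  finally show ?thesis by (simp add: sum_subtractf)
qed

lemma row_in_rows: "(C::real^'n^'m) $ a \<in> rows C"
  unfolding rows_def row_def by (auto simp: vec_lambda_eta)

lemma svd_lower:
  fixes M C :: "real^'n^'m"
  assumes o: "orthn v {..<CARD('n)}"
    and orth: "\<And>i j. i < CARD('n) \<Longrightarrow> j < CARD('n) \<Longrightarrow> i \<noteq> j \<Longrightarrow> inner (M *v v i) (M *v v j) = 0"
    and dec: "\<And>i j. i \<le> j \<Longrightarrow> j < CARD('n) \<Longrightarrow> norm (M *v v j) \<le> norm (M *v v i)"
    and rC: "rank C \<le> r"
  shows "(\<Sum>i<CARD('n). if r \<le> i then norm (M *v v i) ^ 2 else 0) \<le> norm (M - C) ^ 2"
proof -
  let ?n = "CARD('n)"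
  define mu where "mu i = norm (M *v v i) ^ 2" for i
  have o': "orthn v {..<DIM(real^'n)}" using o by simp
  obtain B where B: "B \<subseteq> span (rows C)" "pairwise orthogonal B"
    "\<And>x. x \<in> B \<Longrightarrow> norm x = 1" "independent B" "card B = dim (span (rows C))"
    "span B = span (rows C)"
    by (rule orthonormal_basis_subspace[OF subspace_span]) blast
  have fB: "finite B" using B(4) by (rule finiteI_independent)
  have cardB: "card B \<le> r" using B(5) rC by (simp add: row_rank_def)
  have oB: "orthn id B"
    unfolding orthn_def using B(2,3) by (auto simp: pairwise_def orthogonal_def dot_square_norm)
  have rowb: "norm (M$a) ^ 2 - (\<Sum>b\<in>B. (inner (M$a) b)^2) \<le> norm ((M - C)$a) ^ 2" for a
  proof -
    have "C$a \<in> span (id ` B)" using B(6) row_in_rows[of C a] by (simp add: span_base)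
    from orthn_proj_lower[OF oB fB this, of "M$a"] show ?thesis by simp
  qed
  have e1: "(\<Sum>b\<in>B. norm (M *v b) ^ 2) = (\<Sum>b\<in>B. \<Sum>a\<in>UNIV. (inner (M$a) b)^2)"
    by (simp only: norm_sq_vec matrix_vector_mul_component)
  also have "\<dots> = (\<Sum>a\<in>UNIV. \<Sum>b\<in>B. (inner (M$a) b)^2)" by (rule sum.swap)
  finally have e2: "(\<Sum>b\<in>B. norm (M *v b) ^ 2) = (\<Sum>a\<in>UNIV. \<Sum>b\<in>B. (inner (M$a) b)^2)" .
  have "norm M ^ 2 - (\<Sum>b\<in>B. norm (M *v b) ^ 2) = (\<Sum>a\<in>UNIV. norm (M$a) ^ 2 - (\<Sum>b\<in>B. (inner (M$a) b)^2))"
    unfolding e2 norm_sq_rows[of M] by (rule sum_subtractf[symmetric])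
  also have "\<dots> \<le> (\<Sum>a\<in>UNIV. norm ((M - C)$a) ^ 2)" by (rule sum_mono) (rule rowb)
  also have "\<dots> = norm (M - C) ^ 2" by (simp add: norm_sq_rows)
  finally have step1: "norm M ^ 2 - (\<Sum>b\<in>B. norm (M *v b) ^ 2) \<le> norm (M - C) ^ 2" .
  define c where "c i = (\<Sum>b\<in>B. (inner b (v i))^2)" for i
  have "(\<Sum>b\<in>B. norm (M *v b) ^ 2) = (\<Sum>b\<in>B. \<Sum>i<?n. (inner b (v i))^2 * norm (M *v v i) ^ 2)"
    by (rule sum.cong[OF refl]) (rule svd_expand[OF o orth])
  also have "\<dots> = (\<Sum>i<?n. \<Sum>b\<in>B. (inner b (v i))^2 * norm (M *v v i) ^ 2)"
    by (rule sum.swap)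
  also have "\<dots> = (\<Sum>i<?n. mu i * c i)"
    unfolding c_def mu_def by (simp add: sum_distrib_left mult.commute)
  also have "\<dots> \<le> (\<Sum>i<?n. if i < r then mu i else 0)"
  proof (rule rearr)
    fix i assume i: "i < ?n"
    have "0 \<le> c i" unfolding c_def by (simp add: sum_nonneg)
    moreover have "c i \<le> norm (v i) ^ 2"
      using orthn_bessel[OF oB fB, of "v i"] by (simp add: c_def inner_commute)
    moreover have "norm (v i) = 1" using o i by (simp add: orthn_def norm_eq_sqrt_inner)
    ultimately show "0 \<le> c i \<and> c i \<le> 1" by simp
  next
    fix i j assume "i \<le> j" "j < ?n"
    thus "mu j \<le> mu i" using dec unfolding mu_def by (simp add: power_mono)
  next
    fix i show "0 \<le> mu i" by (simp add: mu_def)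
  next
    have "(\<Sum>i<?n. c i) = (\<Sum>b\<in>B. \<Sum>i<?n. (inner b (v i))^2)"
      unfolding c_def by (rule sum.swap)
    also have "\<dots> = (\<Sum>b\<in>B. 1)"
    proof (rule sum.cong[OF refl])
      fix b assume "b \<in> B"
      have "norm b ^ 2 = (\<Sum>i<?n. (inner b (v i))^2)" using orthn_parseval(2)[OF o', of b] by simp
      thus "(\<Sum>i<?n. (inner b (v i))^2) = 1" using B(3)[OF \<open>b \<in> B\<close>] by simp
    qed
    also have "\<dots> = real (card B)" by simp
    finally show "(\<Sum>i<?n. c i) \<le> real r" using cardB by simp
  qed
  finally have step2: "(\<Sum>b\<in>B. norm (M *v b) ^ 2) \<le> (\<Sum>i<?n. if i < r then mu i else 0)" .
  have nM: "norm M ^ 2 = (\<Sum>i<?n. mu i)" using frob_basis[OF o] by (simp add: mu_def)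
  have "(\<Sum>i<?n. if r \<le> i then mu i else 0) = (\<Sum>i<?n. mu i) - (\<Sum>i<?n. if i < r then mu i else 0)"
    unfolding sum_subtractf[symmetric] by (rule sum.cong) auto
  also have "\<dots> \<le> norm (M - C) ^ 2" using step1 step2 nM by linarith
  finally show ?thesis unfolding mu_def by simp
qed

lemma svd_upper:
  fixes M B :: "real^'n^'m"
  assumes o: "orthn v {..<CARD('n)}"
    and best: "\<And>C. rank C \<le> r \<Longrightarrow> norm (M - B) \<le> norm (M - C)"
  shows "norm (M - B) ^ 2 \<le> (\<Sum>i<CARD('n). if r \<le> i then norm (M *v v i) ^ 2 else 0)"
proof -
  let ?n = "CARD('n)"
  define m where "m = min ?n r"
  define C where "C = (\<chi> a b. \<Sum>i<m. (M *v v i)$a * (v i)$b)"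
  have Cxa: "(C *v x)$a = (\<Sum>i<m. inner (v i) x * (M *v v i)$a)" for x a
  proof -
    have "(C *v x)$a = (\<Sum>b\<in>UNIV. (\<Sum>i<m. (M *v v i)$a * (v i)$b) * x$b)"
      by (simp add: C_def matrix_vector_mult_def)
    also have "\<dots> = (\<Sum>b\<in>UNIV. \<Sum>i<m. (M *v v i)$a * (v i)$b * x$b)"
      by (simp add: sum_distrib_right)
    also have "\<dots> = (\<Sum>i<m. \<Sum>b\<in>UNIV. (M *v v i)$a * (v i)$b * x$b)"
      by (rule sum.swap)
    also have "\<dots> = (\<Sum>i<m. inner (v i) x * (M *v v i)$a)"
      by (simp add: inner_vec_def sum_distrib_left sum_distrib_right mult_ac)
    finally show ?thesis .
  qed
  have Cx: "C *v x = (\<Sum>i<m. inner (v i) x *\<^sub>R (M *v v i))" for x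
    by (simp add: vec_eq_iff Cxa sum_component)
  have "rank C \<le> r"
  proof -
    have "range (\<lambda>x. C *v x) \<subseteq> span ((\<lambda>i. M *v v i) ` {..<m})"
      unfolding Cx by (clarsimp, rule span_sum, rule span_scale, rule span_base, auto)
    hence "dim (range (\<lambda>x. C *v x)) \<le> card ((\<lambda>i. M *v v i) ` {..<m})"
      by (rule dim_le_card) simp
    also have "\<dots> \<le> m" using card_image_le[of "{..<m}" "\<lambda>i. M *v v i"] by simp
    finally show ?thesis by (simp add: rank_dim_range m_def)
  qed
  hence "norm (M - B) \<le> norm (M - C)" by (rule best)
  hence "norm (M - B) ^ 2 \<le> norm (M - C) ^ 2" by (rule power_mono) simp
  also have "norm (M - C) ^ 2 = (\<Sum>j<?n. norm ((M - C) *v v j) ^ 2)" by (rule frob_basis[OF o])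
  also have "\<dots> = (\<Sum>j<?n. if r \<le> j then norm (M *v v j) ^ 2 else 0)"
  proof (rule sum.cong[OF refl])
    fix j assume "j \<in> {..<?n}"
    hence j: "j < ?n" by simp
    have "C *v v j = (\<Sum>i<m. (if i = j then 1 else 0) *\<^sub>R (M *v v i))"
      unfolding Cx by (rule sum.cong[OF refl]) (use o j in \<open>auto simp: orthn_def m_def\<close>)
    also have "\<dots> = (if j < m then M *v v j else 0)"
      by (simp add: if_distrib[of "\<lambda>c. c *\<^sub>R _"] cong: if_cong)
    finally have "C *v v j = (if j < m then M *v v j else 0)" .
    thus "norm ((M - C) *v v j) ^ 2 = (if r \<le> j then norm (M *v v j) ^ 2 else 0)"
      using j by (auto simp: matrix_vector_mult_diff_rdistrib m_def)
  qed
  finally show ?thesis .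
qed

lemma sum_if_const: "(\<Sum>i<(n::nat). if P i then (p::real) else 0) = p * real (card {i\<in>{..<n}. P i})"
proof -
  have "(\<Sum>i\<in>{i\<in>{..<n}. P i}. p) = (\<Sum>i<n. if P i then (p::real) else 0)"
    by (rule sum.inter_filter) simp
  thus ?thesis by (simp add: mult.commute)
qed

lemma tail_avg:
  fixes mu :: "nat \<Rightarrow> real"
  assumes dec: "\<And>i j. i \<le> j \<Longrightarrow> j < n \<Longrightarrow> mu j \<le> mu i"
    and pos: "\<And>i. i < n \<Longrightarrow> 0 \<le> mu i"
    and zero: "\<And>i. r0 \<le> i \<Longrightarrow> i < n \<Longrightarrow> mu i = 0"
    and r: "r1 < r2" "r2 < r0"
  shows "(\<Sum>i<n. if r2 \<le> i then mu i else 0)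
     \<le> (real r0 - real r2) / (real r0 - real r1) * (\<Sum>i<n. if r1 \<le> i then mu i else 0)"
proof -
  define L where "L = (\<Sum>i<n. if r2 \<le> i then mu i else 0)"
  define A where "A = (\<Sum>i<n. if r1 \<le> i \<and> i < r2 then mu i else 0)"
  have split: "(\<Sum>i<n. if r1 \<le> i then mu i else 0) = A + L"
    unfolding A_def L_def sum.distrib[symmetric] by (rule sum.cong) (use r in auto)
  have L0: "0 \<le> L" unfolding L_def by (rule sum_nonneg) (use pos in auto)
  have A0: "0 \<le> A" unfolding A_def by (rule sum_nonneg) (use pos in auto)
  have D: "real r0 - real r1 > 0" using r by simp
  have key: "L * (real r2 - real r1) \<le> (real r0 - real r2) * A"
  proof (cases "n \<le> r2")
    case True
    have "L = 0" unfolding L_def by (rule sum.neutral) (use True in auto)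
    thus ?thesis using A0 r by simp
  next
    case False
    hence rn: "r2 < n" by simp
    define p where "p = mu r2"
    have p0: "0 \<le> p" using pos rn by (simp add: p_def)
    have "L \<le> (\<Sum>i<n. if r2 \<le> i \<and> i < r0 then p else 0)"
      unfolding L_def
    proof (rule sum_mono)
      fix i assume "i \<in> {..<n}"
      hence i: "i < n" by simp
      show "(if r2 \<le> i then mu i else 0) \<le> (if r2 \<le> i \<and> i < r0 then p else 0)"
        using dec[of r2 i] zero[of i] i by (auto simp: p_def)
    qed
    also have "\<dots> = p * real (card {i\<in>{..<n}. r2 \<le> i \<and> i < r0})" by (rule sum_if_const)
    also have "\<dots> \<le> p * (real r0 - real r2)"
    proof -
      have "card {i\<in>{..<n}. r2 \<le> i \<and> i < r0} \<le> card {r2..<r0}"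
        by (rule card_mono) auto
      hence "real (card {i\<in>{..<n}. r2 \<le> i \<and> i < r0}) \<le> real r0 - real r2" using r by simp
      thus ?thesis using p0 by (rule mult_left_mono)
    qed
    finally have Lb: "L \<le> p * (real r0 - real r2)" .
    have "(\<Sum>i<n. if r1 \<le> i \<and> i < r2 then p else 0) \<le> A"
      unfolding A_def
    proof (rule sum_mono)
      fix i assume "i \<in> {..<n}"
      hence i: "i < n" by simp
      show "(if r1 \<le> i \<and> i < r2 then p else 0) \<le> (if r1 \<le> i \<and> i < r2 then mu i else 0)"
        using dec[of i r2] rn by (auto simp: p_def)
    qed
    moreover have "(\<Sum>i<n. if r1 \<le> i \<and> i < r2 then p else 0) = p * (real r2 - real r1)"
    proof -
      have "{i\<in>{..<n}. r1 \<le> i \<and> i < r2} = {r1..<r2}" using rn by auto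
      thus ?thesis using r by (simp add: sum_if_const)
    qed
    ultimately have Ab: "p * (real r2 - real r1) \<le> A" by simp
    have "L * (real r2 - real r1) \<le> p * (real r0 - real r2) * (real r2 - real r1)"
      by (rule mult_right_mono[OF Lb]) (use r in simp)
    also have "\<dots> = (real r0 - real r2) * (p * (real r2 - real r1))" by (simp add: mult_ac)
    also have "\<dots> \<le> (real r0 - real r2) * A"
      by (rule mult_left_mono[OF Ab]) (use r in simp)
    finally show ?thesis .
  qed
  have "L * (real r0 - real r1) \<le> (real r0 - real r2) * (A + L)"
    using key by (simp add: algebra_simps)
  hence "L \<le> (real r0 - real r2) * (A + L) / (real r0 - real r1)"
    using D by (simp add: le_divide_eq)
  thus ?thesis unfolding split L_def[symmetric] by (simp add: mult.commute)
qed

lemma mat_main: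
  fixes M C B :: "real^'n^'m"
  assumes rM: "rank M \<le> r0" and rC: "rank C \<le> r1" and best: "best_rank_approx r2 M B"
    and r: "r1 < r2" "r2 < r0"
  shows "norm (M - B) ^ 2 \<le> (real r0 - real r2) / (real r0 - real r1) * norm (M - C) ^ 2"
proof -
  obtain v where o: "orthn v {..<CARD('n)}"
    and orth: "\<And>i j. i < CARD('n) \<Longrightarrow> j < CARD('n) \<Longrightarrow> i \<noteq> j \<Longrightarrow> inner (M *v v i) (M *v v j) = 0"
    and dec: "\<And>i j. i \<le> j \<Longrightarrow> j < CARD('n) \<Longrightarrow> norm (M *v v j) \<le> norm (M *v v i)"
    by (rule svd_basis[of M]) blast+
  have bst: "\<And>C'. rank C' \<le> r2 \<Longrightarrow> norm (M - B) \<le> norm (M - C')"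
    using best unfolding best_rank_approx_def frob_mat_norm by blast
  have up: "norm (M - B) ^ 2 \<le> (\<Sum>i<CARD('n). if r2 \<le> i then norm (M *v v i) ^ 2 else 0)"
    by (rule svd_upper[OF o bst])
  also have "\<dots> \<le> (real r0 - real r2) / (real r0 - real r1) * (\<Sum>i<CARD('n). if r1 \<le> i then norm (M *v v i) ^ 2 else 0)"
  proof (rule tail_avg[OF _ _ _ r])
    fix i j assume "i \<le> j" "j < CARD('n)"
    thus "norm (M *v v j) ^ 2 \<le> norm (M *v v i) ^ 2" using dec by (simp add: power_mono)
  next
    fix i show "0 \<le> norm (M *v v i) ^ 2" by simp
  next
    fix i assume "r0 \<le> i" "i < CARD('n)"
    hence "M *v v i = 0" using svd_rank_zero[OF o orth dec, of i] rM by simp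
    thus "norm (M *v v i) ^ 2 = 0" by simp
  qed
  also have "\<dots> \<le> (real r0 - real r2) / (real r0 - real r1) * norm (M - C) ^ 2"
  proof -
    have lw: "(\<Sum>i<CARD('n). if r1 \<le> i then norm (M *v v i) ^ 2 else 0) \<le> norm (M - C) ^ 2"
      by (rule svd_lower[OF o orth dec rC])
    have nn: "0 \<le> (real r0 - real r2) / (real r0 - real r1)"
      by (rule divide_nonneg_nonneg) (use r in auto)
    show ?thesis by (rule mult_left_mono[OF lw nn])
  qed
  finally show ?thesis .
qed

lemma sparse_main:
  fixes a :: "'k::finite \<Rightarrow> real"
  assumes pos: "\<And>k. 0 \<le> a k" and Nz: "\<And>k. k \<notin> N \<Longrightarrow> a k = 0" and cN: "card N \<le> s0"
    and cS: "card S = min s2 CARD('k)"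
    and dom: "\<And>k k'. k \<in> S \<Longrightarrow> k' \<notin> S \<Longrightarrow> a k' \<le> a k"
    and cT: "card T \<le> s1" and s: "s1 < s2" "s2 < s0"
  shows "sum a (-S) \<le> (real s0 - real s2) / (real s0 - real s1) * sum a (-T)"
proof -
  have D: "real s0 - real s1 > 0" using s by simp
  have ST0: "0 \<le> sum a (-T)" by (rule sum_nonneg) (use pos in auto)
  show ?thesis
  proof (cases "CARD('k) \<le> s2")
    case True
    hence "card S = CARD('k)" using cS by simp
    hence "S = UNIV" by (intro card_eq_UNIV_imp_eq_UNIV) simp_all
    thus ?thesis using ST0 s by simp
  next
    case False
    hence cS2: "card S = s2" using cS by simp
    hence Sne: "S \<noteq> {}" using s by auto
    define m where "m = Min (a ` S)"
    have mS: "\<And>k. k \<in> S \<Longrightarrow> m \<le> a k" unfolding m_def by simp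
    have "m \<in> a ` S" unfolding m_def by (rule Min_in) (use Sne in auto)
    then obtain k0 where k0': "m = a k0" "k0 \<in> S" by (rule imageE)
    hence k0: "k0 \<in> S" "a k0 = m" by auto
    have mO: "\<And>k. k \<notin> S \<Longrightarrow> a k \<le> m" using dom k0 by metis
    have m0: "0 \<le> m" using pos k0 by metis
    define L where "L = sum a (-S)"
    have Lb: "L \<le> m * (real s0 - real s2)"
    proof -
      have "L = sum a (-S \<inter> N) + sum a (-S - N)"
        unfolding L_def by (metis Diff_eq sum.Int_Diff finite)
      also have "sum a (-S - N) = 0" by (rule sum.neutral) (use Nz in auto)
      also have "sum a (-S \<inter> N) \<le> real (card (-S \<inter> N)) * m"
        by (rule sum_bounded_above) (use mO in auto)
      finally have L1: "L \<le> real (card (-S \<inter> N)) * m" by simp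
      show ?thesis
      proof (cases "m = 0")
        case True thus ?thesis using L1 by simp
      next
        case False
        hence "m > 0" using m0 by simp
        hence "S \<subseteq> N" using mS Nz by (metis not_le subsetI)
        hence "card (-S \<inter> N) = card N - card S"
          by (metis Diff_eq card_Diff_subset finite inf_commute)
        moreover have "s2 \<le> card N" using card_mono[OF _ \<open>S \<subseteq> N\<close>] cS2 by simp
        ultimately have "real (card (-S \<inter> N)) \<le> real s0 - real s2" using cN cS2
          by (simp add: of_nat_diff)
        hence "real (card (-S \<inter> N)) * m \<le> (real s0 - real s2) * m" using m0 by (rule mult_right_mono)
        thus ?thesis using L1 by (simp add: mult.commute)
      qed
    qed
    have e1: "sum a (-T) = sum a (S - T) + sum a (-S - T)"
    proof -
      have "sum a ((S - T) \<union> (-S - T)) = sum a (S - T) + sum a (-S - T)"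
        by (rule sum.union_disjoint) auto
      moreover have "(S - T) \<union> (-S - T) = -T" by auto
      ultimately show ?thesis by simp
    qed
    have e2: "L = sum a (-S - T) + sum a (T - S)"
    proof -
      have "sum a ((-S - T) \<union> (T - S)) = sum a (-S - T) + sum a (T - S)"
        by (rule sum.union_disjoint) auto
      moreover have "(-S - T) \<union> (T - S) = -S" by auto
      ultimately show ?thesis unfolding L_def by simp
    qed
    have b1: "real (card (S - T)) * m \<le> sum a (S - T)"
      by (rule sum_bounded_below) (use mS in auto)
    have b2: "sum a (T - S) \<le> real (card (T - S)) * m"
      by (rule sum_bounded_above) (use mO in auto)
    have c1: "card (S - T) + card (S \<inter> T) = card S"
      by (metis card_Diff_subset_Int card_mono finite Int_lower1 finite_Int le_add_diff_inverse2 card_Diff_subset Diff_Diff_Int)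
    have c2: "card (T - S) + card (S \<inter> T) = card T"
      by (metis Int_commute card_Diff_subset_Int card_mono finite Int_lower1 finite_Int le_add_diff_inverse2 card_Diff_subset Diff_Diff_Int)
    have "real (card (S - T)) - real (card (T - S)) \<ge> real s2 - real s1"
      using c1 c2 cS2 cT by linarith
    hence "m * (real s2 - real s1) \<le> m * (real (card (S - T)) - real (card (T - S)))"
      using m0 by (rule mult_left_mono)
    hence Tb: "L + m * (real s2 - real s1) \<le> sum a (-T)"
      using e1 e2 b1 b2 by (simp add: algebra_simps)
    have "L * (real s2 - real s1) \<le> m * (real s0 - real s2) * (real s2 - real s1)"
      by (rule mult_right_mono[OF Lb]) (use s in simp)
    also have "\<dots> = (real s0 - real s2) * (m * (real s2 - real s1))" by (simp add: mult_ac)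
    also have "\<dots> \<le> (real s0 - real s2) * (sum a (-T) - L)"
      by (rule mult_left_mono) (use Tb s in auto)
    finally have "L * (real s0 - real s1) \<le> (real s0 - real s2) * sum a (-T)"
      by (simp add: algebra_simps)
    hence "L \<le> (real s0 - real s2) * sum a (-T) / (real s0 - real s1)"
      using D by (simp add: le_divide_eq)
    thus ?thesis unfolding L_def by (simp add: mult.commute)
  qed
qed

lemma frob_sq: "frob (F::'k::finite \<Rightarrow> real^'n^'m) ^ 2 = (\<Sum>k\<in>UNIV. norm (F k) ^ 2)"
  by (simp add: frob_norm norm_sq_tensor)

lemma frob_nonneg: "0 \<le> frob (F::'k::finite \<Rightarrow> real^'n^'m)"
  by (simp add: frob_norm)

lemma frob_tri: "frob ((F::'k::finite \<Rightarrow> real^'n^'m) - H) \<le> frob (F - G) + frob (G - H)"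
proof -
  have "(\<chi> k. (F - H) k) = (\<chi> k. (F - G) k) + (\<chi> k. (G - H) k)"
    by (simp add: vec_eq_iff)
  thus ?thesis unfolding frob_norm by (metis norm_triangle_ineq)
qed

lemma frob_le_sq:
  assumes "frob (F::'k::finite \<Rightarrow> real^'n^'m) ^ 2 \<le> c * frob (G::'k \<Rightarrow> real^'n^'m) ^ 2" "0 \<le> c"
  shows "frob F \<le> sqrt c * frob G"
proof -
  have "frob F ^ 2 \<le> (sqrt c * frob G) ^ 2" using assms by (simp add: power_mult_distrib)
  thus ?thesis by (rule power2_le_imp_le) (simp add: frob_nonneg assms)
qed

theorem lemma2:
  fixes Z Y X :: "'k::finite \<Rightarrow> real^'n^'m"
    and r0 r1 r2 s0 s1 s2 :: nat
  assumes "Z \<in> Theta2 r0 s0"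
    and "r1 < r2" and "r2 < r0" and "s1 < s2" and "s2 < s0"
    and "Y \<in> Theta2 r1 s1"
    and "is_P_Theta2 r2 s2 Z X"
  shows "frob (X - Z) \<le>
    (let \<alpha> = sqrt ((real s0 - real s2) / (real s0 - real s1));
         \<beta> = sqrt ((real r0 - real r2) / (real r0 - real r1))
     in (\<alpha> + \<beta> + \<alpha> * \<beta>) * frob (Y - Z))"
proof -
  have rZ: "\<And>k. rank (Z k) \<le> r0" and cZ: "card {k. Z k \<noteq> 0} \<le> s0"
    using assms(1) by (auto simp: Theta2_def)
  have rY: "\<And>k. rank (Y k) \<le> r1" and cY: "card {k. Y k \<noteq> 0} \<le> s1"
    using assms(6) by (auto simp: Theta2_def)
  obtain At S where At: "\<And>k. best_rank_approx r2 (Z k) (At k)"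
    and cS: "card S = min s2 CARD('k)"
    and dom: "\<forall>k\<in>S. \<forall>k'. k' \<notin> S \<longrightarrow> frob_mat (At k') \<le> frob_mat (At k)"
    and Xd: "\<And>k. X k = (if k \<in> S then At k else 0)"
    using assms(7) unfolding is_P_Theta2_def by blast
  define aa where "aa = (real s0 - real s2) / (real s0 - real s1)"
  define bb where "bb = (real r0 - real r2) / (real r0 - real r1)"
  have aa0: "0 \<le> aa" unfolding aa_def by (rule divide_nonneg_nonneg) (use assms in auto)
  have bb0: "0 \<le> bb" unfolding bb_def by (rule divide_nonneg_nonneg) (use assms in auto)
  define \<delta> where "\<delta> = frob (Y - Z)"
  have d0: "0 \<le> \<delta>" unfolding \<delta>_def by (rule frob_nonneg)
  have "frob (At - Z) ^ 2 = (\<Sum>k\<in>UNIV. norm (Z k - At k) ^ 2)"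
    by (simp add: frob_sq norm_minus_commute)
  also have "\<dots> \<le> (\<Sum>k\<in>UNIV. bb * norm (Z k - Y k) ^ 2)"
    by (rule sum_mono) (unfold bb_def, rule mat_main[OF rZ rY At assms(2,3)])
  also have "\<dots> = bb * frob (Y - Z) ^ 2"
    by (simp add: frob_sq sum_distrib_left norm_minus_commute)
  finally have "frob (At - Z) \<le> sqrt bb * frob (Y - Z)" by (rule frob_le_sq[OF _ bb0])
  hence b1: "frob (At - Z) \<le> sqrt bb * \<delta>" by (simp add: \<delta>_def)
  define a where "a k = norm (At k) ^ 2" for k
  have Nz: "a k = 0" if "k \<notin> {k. Z k \<noteq> 0}" for k
  proof -
    have "Z k = 0" using that by simp
    have h: "\<forall>C. rank C \<le> r2 \<longrightarrow> frob_mat (Z k - At k) \<le> frob_mat (Z k - C)"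
      using At[of k] unfolding best_rank_approx_def by blast
    have "rank (0::real^'n^'m) \<le> r2" by simp
    from h[rule_format, OF this] have "frob_mat (Z k - At k) \<le> frob_mat (Z k - 0)" .
    hence "At k = 0" using \<open>Z k = 0\<close> by (simp add: frob_mat_norm)
    thus ?thesis by (simp add: a_def)
  qed
  have "sum a (-S) \<le> aa * sum a (- {k. Y k \<noteq> 0})"
    unfolding aa_def
  proof (rule sparse_main[OF _ Nz cZ cS _ cY assms(4,5)])
    show "\<And>k. 0 \<le> a k" by (simp add: a_def)
  next
    fix k k' assume "k \<in> S" "k' \<notin> S"
    hence "norm (At k') \<le> norm (At k)" using dom by (simp add: frob_mat_norm)
    thus "a k' \<le> a k" by (simp add: a_def power_mono)
  qed (auto)
  moreover have "frob (X - At) ^ 2 = sum a (-S)"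
  proof -
    have "frob (X - At) ^ 2 = (\<Sum>k\<in>UNIV. if k \<in> -S then a k else 0)"
      unfolding frob_sq by (rule sum.cong) (auto simp: Xd a_def)
    also have "\<dots> = sum a {k\<in>UNIV. k \<in> -S}" by (rule sum.inter_filter[symmetric]) simp
    also have "{k\<in>UNIV. k \<in> -S} = -S" by blast
    finally show ?thesis .
  qed
  moreover have "sum a (- {k. Y k \<noteq> 0}) \<le> frob (Y - At) ^ 2"
  proof -
    have "sum a (- {k. Y k \<noteq> 0}) = (\<Sum>k\<in>- {k. Y k \<noteq> 0}. norm ((Y - At) k) ^ 2)"
      by (rule sum.cong) (auto simp: a_def)
    also have "\<dots> \<le> (\<Sum>k\<in>UNIV. norm ((Y - At) k) ^ 2)"
      by (rule sum_mono2) auto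
    finally show ?thesis by (simp add: frob_sq)
  qed
  ultimately have "frob (X - At) ^ 2 \<le> aa * frob (Y - At) ^ 2"
  proof -
    assume h1: "sum a (-S) \<le> aa * sum a (- {k. Y k \<noteq> 0})"
      and h2: "frob (X - At) ^ 2 = sum a (-S)"
      and h3: "sum a (- {k. Y k \<noteq> 0}) \<le> frob (Y - At) ^ 2"
    have "aa * sum a (- {k. Y k \<noteq> 0}) \<le> aa * frob (Y - At) ^ 2"
      by (rule mult_left_mono[OF h3 aa0])
    thus ?thesis using h1 h2 by linarith
  qed
  hence s1: "frob (X - At) \<le> sqrt aa * frob (Y - At)" by (rule frob_le_sq[OF _ aa0])
  have "frob (Y - At) \<le> frob (Y - Z) + frob (Z - At)" by (rule frob_tri)
  moreover have "frob (Z - At) = frob (At - Z)"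
  proof -
    have "(\<chi> k. (Z - At) k) = - (\<chi> k. (At - Z) k)" by (simp add: vec_eq_iff)
    thus ?thesis unfolding frob_norm by (metis norm_minus_cancel)
  qed
  ultimately have "frob (Y - At) \<le> \<delta> + sqrt bb * \<delta>" using b1 by (simp add: \<delta>_def)
  hence "sqrt aa * frob (Y - At) \<le> sqrt aa * (\<delta> + sqrt bb * \<delta>)"
    by (rule mult_left_mono) (simp add: aa0)
  hence s2: "frob (X - At) \<le> sqrt aa * (\<delta> + sqrt bb * \<delta>)" using s1 by linarith
  have "frob (X - Z) \<le> frob (X - At) + frob (At - Z)" by (rule frob_tri)
  also have "\<dots> \<le> sqrt aa * (\<delta> + sqrt bb * \<delta>) + sqrt bb * \<delta>" using s2 b1 by linarith
  also have "\<dots> = (sqrt aa + sqrt bb + sqrt aa * sqrt bb) * \<delta>" by (simp add: algebra_simps)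
  finally show ?thesis unfolding Let_def aa_def bb_def \<delta>_def .
qed

end
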